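(* Let $d,s\in\mathbb{N}_{\ge1}$, let $\boldsymbol\alpha\in\mathbb{N}_{\ge0}^d$ with $\sum_{i=1}^d\alpha_i=\bar\alpha$, and write $a:=\lceil\log_2\bar\alpha\rceil$. For any $0<\epsilon\le\frac{3^{a}-1}{3^{a-1}-1}$ (read as $+\infty$ when $3^{a-1}-1=0$), there exists a ReLU FNN function $f^{(mnm)}_{FF}:\mathbb{R}^d\to\mathbb{R}$ with width $21\cdot2^{a-1}$, depth $C\ln\frac{3^{a}-1}{2\epsilon}$ and weight bound $C$, where $C$ is a constant independent of $\epsilon$, such that for all $\boldsymbol x\in[0,1]^d$, $$|f^{(mnm)}_{FF}(\boldsymbol x)-x_1^{\alpha_1}x_2^{\alpha_2}\cdots x_d^{\alpha_d}|\le\epsilon.$$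
   Context: ReLU FNN of depth $L$, width $W$: $f_0=x$, $f_l=\sigma_R(W_lf_{l-1}+b_l)$ ($1\le l\le L-1$), $f=W_Lf_{L-1}+b_L$ with hidden layers of width $W$, $\sigma_R(x)=\max\{x,0\}$; the weight bound is the maximum absolute value of all weights and biases. *)

theory Defs
  imports Complex_Main
begin

text \<open>A network is a list of affine layers (W, b);
 W is given as a list of rows (rows = output dimension), b as a list.
 A network with L layers has depth L: f_0 = x, f_l = relu(W_l f_(l-1) + b_l)
 for 1 <= l <= L-1, and the output is W_L f_(L-1) + b_L (no activation).\<close>

definition relu :: "real \<Rightarrow> real" where
  "relu t = max t 0"

definition affine :: "real list list \<Rightarrow> real list \<Rightarrow> real list \<Rightarrow> real list" where
  "affine W b x = map2 (\<lambda>row bi. (\<Sum>j<length x. row ! j * x ! j) + bi) W b"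

fun net_eval :: "(real list list \<times> real list) list \<Rightarrow> real list \<Rightarrow> real list" where
  "net_eval [] x = x"
| "net_eval [(W, b)] x = affine W b x"
| "net_eval ((W, b) # rest) x = net_eval rest (map relu (affine W b x))"

definition layer_ok :: "nat \<Rightarrow> nat \<Rightarrow> real list list \<times> real list \<Rightarrow> bool" where
  "layer_ok n m Wb \<longleftrightarrow> length (fst Wb) = m \<and> length (snd Wb) = m
      \<and> (\<forall>row \<in> set (fst Wb). length row = n)"

definition relu_fnn :: "nat \<Rightarrow> nat \<Rightarrow> nat \<Rightarrow> real \<Rightarrow> (real list list \<times> real list) list \<Rightarrow> bool" where
  "relu_fnn d w L B N \<longleftrightarrow> L \<ge> 1 \<and> length N = L
     \<and> (\<forall>l<L. layer_ok (if l = 0 then d else w) (if l = L - 1 then 1 else w) (N ! l))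
     \<and> (\<forall>l<L. (\<forall>row \<in> set (fst (N ! l)). \<forall>c \<in> set row. \<bar>c\<bar> \<le> B)
              \<and> (\<forall>c \<in> set (snd (N ! l)). \<bar>c\<bar> \<le> B))"

end

theory Submission
  imports Defs
begin


definition coef :: "(nat \<times> real) list \<Rightarrow> nat \<Rightarrow> real" where
  "coef r j = sum_list (map (\<lambda>(k,a). if k = j then a else 0) r)"

definition mkL :: "nat \<Rightarrow> nat \<Rightarrow> (nat \<Rightarrow> (nat \<times> real) list) \<Rightarrow> (nat \<Rightarrow> real) \<Rightarrow> real list list \<times> real list" where
  "mkL n m R B = (map (\<lambda>i. map (coef (R i)) [0..<n]) [0..<m], map B [0..<m])"

definition sp :: "(nat \<times> real) list \<Rightarrow> real list \<Rightarrow> real" where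
  "sp r x = sum_list (map (\<lambda>(k,a). a * x ! k) r)"

fun hid :: "(real list list \<times> real list) list \<Rightarrow> real list \<Rightarrow> real list" where
  "hid [] x = x"
| "hid ((W,b) # Ls) x = hid Ls (map relu (affine W b x))"

lemma hid_append: "hid (A @ B) x = hid B (hid A x)"
  by (induction A arbitrary: x) auto

lemma net_eval_snoc: "net_eval (Ls @ [(W,b)]) x = affine W b (hid Ls x)"
proof (induction Ls arbitrary: x)
  case Nil then show ?case by simp
next
  case (Cons L Ls)
  obtain W' b' where L: "L = (W',b')" by fastforce
  obtain y ys where "Ls @ [(W,b)] = y # ys" by (cases "Ls @ [(W,b)]") auto
  then show ?case using Cons L by simp
qed

lemma sum_coef:
  assumes "\<forall>(k,a)\<in>set r. k < n"
  shows "(\<Sum>j<n. coef r j * x ! j) = sp r x"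
  using assms
proof (induction r)
  case Nil then show ?case by (simp add: coef_def sp_def)
next
  case (Cons p r)
  obtain k a where p: "p = (k,a)" by fastforce
  have k: "k < n" using Cons.prems p by auto
  have c: "\<And>j. coef (p#r) j * x ! j = (if k = j then a * x ! j else 0) + coef r j * x ! j"
    by (simp add: coef_def p distrib_right)
  have "(\<Sum>j<n. coef (p#r) j * x ! j) = (\<Sum>j<n. (if k = j then a * x ! j else 0)) + (\<Sum>j<n. coef r j * x ! j)"
    unfolding c by (simp add: sum.distrib)
  also have "\<dots> = a * x ! k + sp r x" using k Cons by simp
  finally show ?case by (simp add: sp_def p)
qed

lemma affine_mkL:
  assumes "length x = n" "\<forall>i<m. \<forall>(k,a)\<in>set (R i). k < n"
  shows "affine (fst (mkL n m R B)) (snd (mkL n m R B)) x = map (\<lambda>i. sp (R i) x + B i) [0..<m]"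
proof (rule nth_equalityI)
  show "length (affine (fst (mkL n m R B)) (snd (mkL n m R B)) x) = length (map (\<lambda>i. sp (R i) x + B i) [0..<m])"
    by (simp add: affine_def mkL_def)
next
  fix i assume "i < length (affine (fst (mkL n m R B)) (snd (mkL n m R B)) x)"
  then have i: "i < m" by (simp add: affine_def mkL_def)
  have "(\<Sum>j<n. map (coef (R i)) [0..<n] ! j * x ! j) = (\<Sum>j<n. coef (R i) j * x ! j)"
    by (rule sum.cong) auto
  then show "affine (fst (mkL n m R B)) (snd (mkL n m R B)) x ! i = map (\<lambda>i. sp (R i) x + B i) [0..<m] ! i"
    using i assms sum_coef[of "R i" n x] by (simp add: affine_def mkL_def)
qed

lemma hid_mkL:
  assumes "length x = n" "\<forall>i<m. \<forall>(k,a)\<in>set (R i). k < n"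
  shows "hid (mkL n m R B # Ls) x = hid Ls (map (\<lambda>i. relu (sp (R i) x + B i)) [0..<m])"
  using affine_mkL[OF assms, of B] by (simp add: mkL_def o_def)

lemma coef_bound:
  assumes "sum_list (map (\<lambda>(k,a). \<bar>a\<bar>) r) \<le> C"
  shows "\<bar>coef r j\<bar> \<le> C"
proof -
  have "\<bar>coef r j\<bar> \<le> sum_list (map (\<lambda>(k,a). \<bar>a\<bar>) r)"
  proof (induction r)
    case Nil then show ?case by (simp add: coef_def)
  next
    case (Cons p r)
    obtain k a where p: "p = (k,a)" by fastforce
    have "\<bar>coef (p#r) j\<bar> \<le> \<bar>if k = j then a else 0\<bar> + \<bar>coef r j\<bar>"
      by (simp add: coef_def p abs_triangle_ineq)
    also have "\<dots> \<le> \<bar>a\<bar> + sum_list (map (\<lambda>(k,a). \<bar>a\<bar>) r)" using Cons by auto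
    finally show ?case by (simp add: p)
  qed
  then show ?thesis using assms by linarith
qed

lemma mkL_ok:
  assumes "\<forall>i<m. sum_list (map (\<lambda>(k,a). \<bar>a\<bar>) (R i)) \<le> C" "\<forall>i<m. \<bar>B i\<bar> \<le> C"
  shows "layer_ok n m (mkL n m R B) \<and> (\<forall>row \<in> set (fst (mkL n m R B)). \<forall>c \<in> set row. \<bar>c\<bar> \<le> C)
              \<and> (\<forall>c \<in> set (snd (mkL n m R B)). \<bar>c\<bar> \<le> C)"
  using assms coef_bound by (auto simp: layer_ok_def mkL_def)



definition tent :: "real \<Rightarrow> real" where
  "tent y = 2 * relu y - 4 * relu (y - 1/2)"

definition EE :: "real \<Rightarrow> real" where "EE y = y - y^2"

lemma tent_eq: "0 \<le> y \<Longrightarrow> tent y = (if y \<le> 1/2 then 2*y else 2 - 2*y)"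
  by (auto simp: tent_def relu_def max_def)

lemma tent_01: "0 \<le> y \<Longrightarrow> y \<le> 1 \<Longrightarrow> 0 \<le> tent y \<and> tent y \<le> 1"
  by (auto simp: tent_eq)

lemma tentpow_01: "0 \<le> y \<Longrightarrow> y \<le> 1 \<Longrightarrow> 0 \<le> (tent^^s) y \<and> (tent^^s) y \<le> 1"
  by (induction s) (auto simp: tent_01)

lemma EE_rec: "0 \<le> y \<Longrightarrow> y \<le> 1 \<Longrightarrow> EE y = tent y / 4 + EE (tent y) / 4"
  by (auto simp: tent_eq EE_def power2_eq_square field_simps)

lemma EE_bd: "0 \<le> y \<Longrightarrow> y \<le> 1 \<Longrightarrow> 0 \<le> EE y \<and> EE y \<le> 1/4"
proof -
  assume a: "0 \<le> y" "y \<le> 1"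
  moreover have "0 \<le> (y - 1/2)^2" by simp
  moreover have "y * y \<le> y * 1" using a by (intro mult_left_mono) auto
  ultimately show ?thesis by (auto simp: EE_def power2_eq_square algebra_simps)
qed

lemma sq_series:
  assumes "0 \<le> u" "u \<le> 1"
  shows "u - (\<Sum>t\<in>{1..s}. (tent^^t) u / 4^t) = u^2 + EE ((tent^^s) u) / 4^s"
proof (induction s)
  case 0 then show ?case by (simp add: EE_def)
next
  case (Suc s)
  have r: "EE ((tent^^s) u) = tent ((tent^^s) u) / 4 + EE (tent ((tent^^s) u)) / 4"
    using EE_rec tentpow_01 assms by blast
  have "u - (\<Sum>t\<in>{1..Suc s}. (tent^^t) u / 4^t) = u - (\<Sum>t\<in>{1..s}. (tent^^t) u / 4^t) - (tent^^Suc s) u / 4^Suc s"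
    by simp
  also have "\<dots> = u^2 + EE ((tent^^Suc s) u) / 4^Suc s"
    unfolding Suc r by (simp add: field_simps)
  finally show ?case .
qed

lemma sq_approx:
  assumes "0 \<le> u" "u \<le> 1"
  shows "u^2 \<le> u - (\<Sum>t\<in>{1..s}. (tent^^t) u / 4^t) \<and> u - (\<Sum>t\<in>{1..s}. (tent^^t) u / 4^t) \<le> u^2 + 1 / 4^(Suc s)"
proof -
  have e: "0 \<le> EE ((tent^^s) u)" "EE ((tent^^s) u) \<le> 1/4"
    using EE_bd[of "(tent^^s) u"] tentpow_01[OF assms, of s] by auto
  have "EE ((tent^^s) u) / 4^s \<le> (1/4) / 4^s" using e by (intro divide_right_mono) auto
  moreover have "0 \<le> EE ((tent^^s) u) / 4^s" using e by simp
  ultimately show ?thesis unfolding sq_series[OF assms, of s] by (simp add: field_simps)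
qed



definition uu :: "real \<Rightarrow> real \<Rightarrow> nat \<Rightarrow> real" where
  "uu p z c = (if c = 0 then (p + z)/2 else if c = 1 then p else z)"

definition urow :: "nat \<Rightarrow> nat \<Rightarrow> nat \<Rightarrow> (nat \<times> real) list" where
  "urow n k c = (if c = 0 then [(n,1/2),(n+1,-1/2),(k,1/2)] else if c = 1 then [(n,1),(n+1,-1)] else [(k,1)])"

definition RSt :: "nat \<Rightarrow> nat \<Rightarrow> nat \<Rightarrow> (nat \<times> real) list" where
  "RSt n k i = (if i < n then [(i,1)] else if n+2 \<le> i \<and> i < n+11 then urow n k ((i-(n+2)) div 3) else [])"

definition BCh :: "nat \<Rightarrow> nat \<Rightarrow> real" where
  "BCh n i = (if n+2 \<le> i \<and> i < n+11 \<and> (i-(n+2)) mod 3 = 1 then -1/2 else 0)"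

definition RSp :: "nat \<Rightarrow> nat \<Rightarrow> nat \<Rightarrow> (nat \<times> real) list" where
  "RSp n s i = (if i < n then [(i,1)] else if n+2 \<le> i \<and> i < n+11 then
     (if (i-(n+2)) mod 3 = 2 then [(i-2, -2/4^s), (i-1, 4/4^s), (i,1)]
      else [(n+2+3*((i-(n+2)) div 3), 2), (n+3+3*((i-(n+2)) div 3), -4)]) else [])"

definition RFi :: "nat \<Rightarrow> nat \<Rightarrow> (nat \<times> real) list" where
  "RFi n i = (if i < n then [(i,1)] else if i = n \<or> i = n+1 then [(n+4,2),(n+7,-1/2),(n+10,-1/2)] else [])"

definition BFi :: "nat \<Rightarrow> nat \<Rightarrow> real" where
  "BFi n i = (if i = n+1 then -1 else 0)"

definition RIn :: "nat \<Rightarrow> nat list \<Rightarrow> nat \<Rightarrow> (nat \<times> real) list" where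
  "RIn n fl i = (if i < n then [(fl!i,1)] else if i = n \<or> i = n+1 then [(fl!0,1)] else [])"

definition PS :: "nat \<Rightarrow> nat \<Rightarrow> (nat \<Rightarrow> real) \<Rightarrow> real \<Rightarrow> real list \<Rightarrow> bool" where
  "PS n w z p v \<longleftrightarrow> length v = w \<and> (\<forall>j<n. v!j = z j) \<and> v!n - v!(n+1) = p"

definition CS :: "nat \<Rightarrow> nat \<Rightarrow> (nat \<Rightarrow> real) \<Rightarrow> nat \<Rightarrow> real \<Rightarrow> nat \<Rightarrow> real list \<Rightarrow> bool" where
  "CS n w z k p s v \<longleftrightarrow> length v = w \<and> (\<forall>j<n. v!j = z j) \<and>
     (\<forall>c<3. v!(n+2+3*c) = relu ((tent^^s) (uu p (z k) c)) \<and>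
            v!(n+3+3*c) = relu ((tent^^s) (uu p (z k) c) - 1/2) \<and>
            v!(n+4+3*c) = uu p (z k) c - (\<Sum>t\<in>{1..s}. (tent^^t) (uu p (z k) c) / 4^t))"

lemma relu_id: "0 \<le> t \<Longrightarrow> relu t = t" by (simp add: relu_def)

lemma uu_01: "0 \<le> p \<Longrightarrow> p \<le> 1 \<Longrightarrow> 0 \<le> z \<Longrightarrow> z \<le> 1 \<Longrightarrow> 0 \<le> uu p z c \<and> uu p z c \<le> 1"
  by (auto simp: uu_def)

lemma c3: "c < (3::nat) \<Longrightarrow> c = 0 \<or> c = 1 \<or> c = 2" by auto

lemma start_ok:
  assumes "PS n w z p v" "0 \<le> p" "p \<le> 1" "\<forall>j<n. 0 \<le> z j \<and> z j \<le> 1" "k < n" "n + 11 \<le> w"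
  shows "CS n w z k p 0 (map (\<lambda>i. relu (sp (RSt n k i) v + BCh n i)) [0..<w])"
proof -
  have zk: "0 \<le> z k" "z k \<le> 1" using assms by auto
  have v: "v!k = z k" "v!n - v!(n+1) = p" using assms by (auto simp: PS_def)
  have ch: "relu (sp (urow n k c) v) = uu p (z k) c \<and> relu (sp (urow n k c) v - 1/2) = relu (uu p (z k) c - 1/2)"
    if "c < 3" for c
  proof -
    have "sp (urow n k c) v = uu p (z k) c"
    proof -
      consider "c = 0" | "c = 1" | "c = 2" using \<open>c < 3\<close> by linarith
      then show ?thesis
      proof cases
        case 1 then show ?thesis using v by (simp add: sp_def urow_def uu_def)
      next
        case 2 then show ?thesis using v by (simp add: sp_def urow_def uu_def)
      next
        case 3 then show ?thesis using v by (simp add: sp_def urow_def uu_def)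
      qed
    qed
    then show ?thesis using uu_01[OF assms(2,3) zk] relu_id by auto
  qed
  have d1: "(n + 3 + 3 * c - (n + 2)) div 3 = c" "(n + 3 + 3 * c - (n + 2)) mod 3 = 1"
     "(n + 4 + 3 * c - (n + 2)) div 3 = c" "(n + 4 + 3 * c - (n + 2)) mod 3 = 2" for c :: nat
    by (simp_all add: mod_Suc)
  let ?v = "map (\<lambda>i. relu (sp (RSt n k i) v + BCh n i)) [0..<w]"
  have L: "length ?v = w" by simp
  have Z: "\<forall>j<n. ?v!j = z j"
  proof (intro allI impI)
    fix j assume j: "j < n"
    then have "?v!j = relu (v!j)" using assms(6) by (simp add: RSt_def BCh_def sp_def)
    then show "?v!j = z j" using j assms(1,4) relu_id by (simp add: PS_def)
  qed
  have C: "?v!(n+2+3*c) = relu ((tent^^0) (uu p (z k) c)) \<and>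
            ?v!(n+3+3*c) = relu ((tent^^0) (uu p (z k) c) - 1/2) \<and>
            ?v!(n+4+3*c) = uu p (z k) c - (\<Sum>t\<in>{1..0}. (tent^^t) (uu p (z k) c) / 4^t)" if c: "c < 3" for c
  proof -
    have i1: "n+2+3*c < w" "n+3+3*c < w" "n+4+3*c < w" using c assms(6) by auto
    have "?v!(n+2+3*c) = relu (sp (urow n k c) v)" using i1 c by (simp add: RSt_def BCh_def)
    moreover have "?v!(n+3+3*c) = relu (sp (urow n k c) v - 1/2)" using i1 c d1 by (simp add: RSt_def BCh_def)
    moreover have "?v!(n+4+3*c) = relu (sp (urow n k c) v)" using i1 c d1 by (simp add: RSt_def BCh_def)
    ultimately show ?thesis using ch[OF c] uu_01[OF assms(2,3) zk] relu_id by simp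
  qed
  show ?thesis unfolding CS_def using L Z C by blast
qed


lemma dm3: "(3*c+1) div 3 = (c::nat)" "(3*c+1) mod 3 = (1::nat)" "(3*c+2) div 3 = (c::nat)" "(3*c+2) mod 3 = (2::nat)"
  "(3*c) div 3 = (c::nat)" "(3*c) mod 3 = (0::nat)"
  "Suc (3*c) div 3 = (c::nat)" "Suc (3*c) mod 3 = (1::nat)" "Suc (Suc (3*c)) div 3 = (c::nat)" "Suc (Suc (3*c)) mod 3 = (2::nat)"
  by (simp_all add: mod_Suc)

lemma step_ok:
  assumes "CS n w z k p s v" "0 \<le> p" "p \<le> 1" "0 \<le> z k" "z k \<le> 1" "n + 11 \<le> w" "\<forall>j<n. 0 \<le> z j"
  shows "CS n w z k p (Suc s) (map (\<lambda>i. relu (sp (RSp n (Suc s) i) v + BCh n i)) [0..<w])"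
proof -
  let ?v = "map (\<lambda>i. relu (sp (RSp n (Suc s) i) v + BCh n i)) [0..<w]"
  have L: "length ?v = w" by simp
  have Z: "\<forall>j<n. ?v!j = z j"
  proof (intro allI impI)
    fix j assume j: "j < n"
    then have "?v!j = relu (v!j)" using assms(6) by (simp add: RSp_def BCh_def sp_def)
    moreover have "v!j = z j" using j assms(1) by (simp add: CS_def)
    moreover have "0 \<le> z j" using assms(7) j by auto
    ultimately show "?v!j = z j" using relu_id by simp
  qed
  have C: "?v!(n+2+3*c) = relu ((tent^^Suc s) (uu p (z k) c)) \<and>
            ?v!(n+3+3*c) = relu ((tent^^Suc s) (uu p (z k) c) - 1/2) \<and>
            ?v!(n+4+3*c) = uu p (z k) c - (\<Sum>t\<in>{1..Suc s}. (tent^^t) (uu p (z k) c) / 4^t)" if c: "c < 3" for c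
  proof -
    define u where "u = uu p (z k) c"
    define y where "y = (tent^^s) u"
    have u01: "0 \<le> u" "u \<le> 1" using uu_01[OF assms(2-5)] u_def by auto
    have s1: "n + 2 + 3 * c - (n + 2) = 3*c" "n + 3 + 3 * c - (n + 2) = 3*c+1" "n + 4 + 3 * c - (n + 2) = 3*c+2"
      "n + 4 + 3 * c - 2 = n + 2 + 3 * c" "n + 4 + 3 * c - 1 = n + 3 + 3 * c" by simp_all
    have vv: "v!(n+2+3*c) = relu y" "v!(n+3+3*c) = relu (y - 1/2)"
       "v!(n+4+3*c) = u - (\<Sum>t\<in>{1..s}. (tent^^t) u / 4^t)"
      using assms(1) c by (simp_all add: CS_def u_def y_def)
    have i1: "n+2+3*c < w" "n+3+3*c < w" "n+4+3*c < w" using c assms(6) by auto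
    have e3: "3 + (n + 3*c) = n+3+3*c" by simp
    have vv2: "v!(3 + (n + 3*c)) = relu (y - 1/2)" unfolding e3 by (rule vv(2))
    have tt: "(tent^^Suc s) u = 2 * relu y - 4 * relu (y - 1/2)" by (simp add: y_def tent_def)
    have "?v!(n+2+3*c) = relu (2 * relu y - 4 * relu (y - 1/2))" using i1 c s1 vv
      by (simp add: RSp_def BCh_def sp_def dm3)
    moreover have "?v!(n+3+3*c) = relu (2 * relu y - 4 * relu (y - 1/2) - 1/2)" using i1 c s1 vv
      by (simp add: RSp_def BCh_def sp_def dm3)
    moreover have "?v!(n+4+3*c) = relu (-2/4^Suc s * relu y + 4/4^Suc s * relu (y - 1/2) + (u - (\<Sum>t\<in>{1..s}. (tent^^t) u / 4^t)))"
    proof -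
      have "?v!(n+4+3*c) = relu (sp [(n+2+3*c, -2/4^Suc s), (n+3+3*c, 4/4^Suc s), (n+4+3*c, 1)] v)"
        using i1 c s1 by (simp add: RSp_def BCh_def dm3) (simp add: algebra_simps)
      also have "sp [(n+2+3*c, -2/4^Suc s), (n+3+3*c, 4/4^Suc s), (n+4+3*c, 1)] v =
          -2/4^Suc s * relu y + 4/4^Suc s * relu (y - 1/2) + (u - (\<Sum>t\<in>{1..s}. (tent^^t) u / 4^t))"
        unfolding sp_def using vv by simp
      finally show ?thesis .
    qed
    moreover have "-2/4^Suc s * relu y + 4/4^Suc s * relu (y - 1/2) + (u - (\<Sum>t\<in>{1..s}. (tent^^t) u / 4^t))
       = u - (\<Sum>t\<in>{1..Suc s}. (tent^^t) u / 4^t)"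
    proof -
      have a: "-2/4^Suc s * relu y + 4/4^Suc s * relu (y - 1/2) = - (tent^^Suc s) u / 4^Suc s"
        unfolding tt by (simp add: divide_simps)
      have b: "(\<Sum>t\<in>{1..Suc s}. (tent^^t) u / 4^t) = (\<Sum>t\<in>{1..s}. (tent^^t) u / 4^t) + (tent^^Suc s) u / 4^Suc s"
        by simp
      show ?thesis unfolding a b by simp
    qed
    moreover have "0 \<le> u - (\<Sum>t\<in>{1..Suc s}. (tent^^t) u / 4^t)"
      using sq_approx[OF u01, of "Suc s"] by (smt (verit) zero_le_power2)
    ultimately show ?thesis using tt relu_id u_def by simp
  qed
  show ?thesis unfolding CS_def using L Z C by blast
qed


lemma idx_RSp: "i < w \<Longrightarrow> n + 11 \<le> w \<Longrightarrow> \<forall>(k,a)\<in>set (RSp n s i). k < w"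
proof -
  assume a: "i < w" "n + 11 \<le> w"
  have "(i - (n+2)) div 3 \<le> 8 div 3" if "i < n + 11" using that by (intro div_le_mono) linarith
  then show ?thesis using a unfolding RSp_def by auto
qed

lemma idx_RSt: "i < w \<Longrightarrow> n + 11 \<le> w \<Longrightarrow> k < n \<Longrightarrow> \<forall>(k',a)\<in>set (RSt n k i). k' < w"
  unfolding RSt_def urow_def by auto

lemma idx_RFi: "i < w \<Longrightarrow> n + 11 \<le> w \<Longrightarrow> \<forall>(k,a)\<in>set (RFi n i). k < w"
  unfolding RFi_def by auto

lemma steps_ok:
  assumes "CS n w z k p 0 v" "0 \<le> p" "p \<le> 1" "0 \<le> z k" "z k \<le> 1" "n + 11 \<le> w" "\<forall>j<n. 0 \<le> z j"
  shows "CS n w z k p m (hid (map (\<lambda>s. mkL w w (RSp n s) (BCh n)) [1..<m+1]) v)"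
proof (induction m)
  case 0 then show ?case using assms by simp
next
  case (Suc m)
  let ?h = "hid (map (\<lambda>s. mkL w w (RSp n s) (BCh n)) [1..<m+1]) v"
  have l: "length ?h = w" using Suc by (simp add: CS_def)
  have "hid (map (\<lambda>s. mkL w w (RSp n s) (BCh n)) [1..<Suc m+1]) v = hid [mkL w w (RSp n (Suc m)) (BCh n)] ?h"
    by (simp add: hid_append)
  also have "\<dots> = map (\<lambda>i. relu (sp (RSp n (Suc m) i) ?h + BCh n i)) [0..<w]"
    using hid_mkL[OF l, of w "RSp n (Suc m)" "BCh n" "[]"] idx_RSp assms(6) by simp
  finally show ?case using step_ok[OF Suc assms(2-7)] by simp
qed

lemma clip: "0 \<le> q \<Longrightarrow> q \<le> 1 \<Longrightarrow> \<bar>relu T - relu (T-1) - q\<bar> \<le> \<bar>T - q\<bar> \<and> 0 \<le> relu T - relu (T-1) \<and> relu T - relu (T-1) \<le> 1"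
  by (auto simp: relu_def max_def)

lemma fin_ok:
  assumes "CS n w z k p m v" "0 \<le> p" "p \<le> 1" "0 \<le> z k" "z k \<le> 1" "n + 11 \<le> w" "\<forall>j<n. 0 \<le> z j"
  shows "\<exists>p'. PS n w z p' (map (\<lambda>i. relu (sp (RFi n i) v + BFi n i)) [0..<w]) \<and> 0 \<le> p' \<and> p' \<le> 1
            \<and> \<bar>p' - p * z k\<bar> \<le> 1/4^m"
proof -
  let ?v = "map (\<lambda>i. relu (sp (RFi n i) v + BFi n i)) [0..<w]"
  define A where "A c = v!(n+4+3*c)" for c
  define U where "U c = uu p (z k) c" for c
  have Ab: "U c ^ 2 \<le> A c \<and> A c \<le> U c ^ 2 + 1/4^Suc m" if "c < 3" for c
  proof -
    have "A c = U c - (\<Sum>t\<in>{1..m}. (tent^^t) (U c) / 4^t)" using assms(1) that by (simp add: CS_def A_def U_def)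
    then show ?thesis using sq_approx[of "U c" m] uu_01[OF assms(2-5)] U_def by simp
  qed
  define T where "T = 2 * A 0 - A 1 / 2 - A 2 / 2"
  have vT: "?v!n = relu T" "?v!(n+1) = relu (T - 1)" using assms(6)
    by (simp_all add: RFi_def BFi_def sp_def T_def A_def add.commute) (simp_all add: algebra_simps)
  have Z: "\<forall>j<n. ?v!j = z j"
  proof (intro allI impI)
    fix j assume j: "j < n"
    then have "?v!j = relu (v!j)" using assms(6) by (simp add: RFi_def BFi_def sp_def)
    moreover have "v!j = z j" using j assms(1) by (simp add: CS_def)
    moreover have "0 \<le> z j" using assms(7) j by auto
    ultimately show "?v!j = z j" using relu_id by simp
  qed
  have id: "2 * U 0 ^ 2 - U 1 ^ 2 / 2 - U 2 ^ 2 / 2 = p * z k"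
    by (simp add: U_def uu_def power2_eq_square field_simps)
  have "\<bar>T - p * z k\<bar> \<le> 2 / 4^Suc m"
    using Ab[of 0] Ab[of 1] Ab[of 2] id unfolding T_def by (simp add: abs_le_iff)
  also have "2 / 4^Suc m \<le> (1::real) / 4^m" by (simp add: divide_simps)
  finally have Te: "\<bar>T - p * z k\<bar> \<le> 1 / 4^m" .
  have pz: "0 \<le> p * z k" "p * z k \<le> 1" using assms(2-5) by (auto simp: mult_le_one)
  show ?thesis
    apply (rule exI[of _ "relu T - relu (T-1)"])
    using clip[OF pz, of T] Te vT Z by (auto simp: PS_def)
qed


definition blk :: "nat \<Rightarrow> nat \<Rightarrow> nat \<Rightarrow> nat \<Rightarrow> (real list list \<times> real list) list" where
  "blk n w m k = [mkL w w (RSt n k) (BCh n)] @ map (\<lambda>s. mkL w w (RSp n s) (BCh n)) [1..<m+1] @ [mkL w w (RFi n) (BFi n)]"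

lemma block_ok:
  assumes "PS n w z p v" "0 \<le> p" "p \<le> 1" "\<forall>j<n. 0 \<le> z j \<and> z j \<le> 1" "k < n" "n + 11 \<le> w"
  shows "\<exists>p'. PS n w z p' (hid (blk n w m k) v) \<and> 0 \<le> p' \<and> p' \<le> 1 \<and> \<bar>p' - p * z k\<bar> \<le> 1/4^m"
proof -
  have zk: "0 \<le> z k" "z k \<le> 1" "\<forall>j<n. 0 \<le> z j" using assms(4,5) by auto
  have lv: "length v = w" using assms(1) by (simp add: PS_def)
  let ?v1 = "map (\<lambda>i. relu (sp (RSt n k i) v + BCh n i)) [0..<w]"
  have c0: "CS n w z k p 0 ?v1" by (rule start_ok[OF assms])
  let ?v2 = "hid (map (\<lambda>s. mkL w w (RSp n s) (BCh n)) [1..<m+1]) ?v1"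
  have c1: "CS n w z k p m ?v2" by (rule steps_ok[OF c0 assms(2,3) zk(1,2) assms(6) zk(3)])
  have l2: "length ?v2 = w" using c1 by (simp add: CS_def)
  have "hid (blk n w m k) v = hid [mkL w w (RFi n) (BFi n)] ?v2"
    unfolding blk_def hid_append using hid_mkL[OF lv, of w "RSt n k" "BCh n" "[]"] idx_RSt assms(5,6) by simp
  also have "\<dots> = map (\<lambda>i. relu (sp (RFi n i) ?v2 + BFi n i)) [0..<w]"
    using hid_mkL[OF l2, of w "RFi n" "BFi n" "[]"] idx_RFi assms(6) by simp
  finally show ?thesis using fin_ok[OF c1 assms(2,3) zk(1,2) assms(6) zk(3)] by simp
qed

lemma loop_ok:
  assumes "PS n w z (z 0) v0" "\<forall>j<n. 0 \<le> z j \<and> z j \<le> 1" "n + 11 \<le> w"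
  shows "1 \<le> k \<Longrightarrow> k \<le> n \<Longrightarrow> \<exists>p. PS n w z p (hid (concat (map (blk n w m) [1..<k])) v0) \<and> 0 \<le> p \<and> p \<le> 1
     \<and> \<bar>p - (\<Prod>j<k. z j)\<bar> \<le> (real k - 1) / 4^m"
proof (induction k)
  case 0 then show ?case by simp
next
  case (Suc k)
  show ?case
  proof (cases "k = 0")
    case True then show ?thesis using assms Suc.prems by auto
  next
    case False
    then obtain p where p: "PS n w z p (hid (concat (map (blk n w m) [1..<k])) v0)" "0 \<le> p" "p \<le> 1"
      "\<bar>p - (\<Prod>j<k. z j)\<bar> \<le> (real k - 1) / 4^m" using Suc by auto
    obtain p' where p': "PS n w z p' (hid (blk n w m k) (hid (concat (map (blk n w m) [1..<k])) v0))"
      "0 \<le> p'" "p' \<le> 1" "\<bar>p' - p * z k\<bar> \<le> 1/4^m"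
      using block_ok[OF p(1-3) assms(2) _ assms(3), of k m] Suc.prems by auto
    have e: "hid (concat (map (blk n w m) [1..<Suc k])) v0 = hid (blk n w m k) (hid (concat (map (blk n w m) [1..<k])) v0)"
      using False by (simp add: hid_append)
    have zk: "0 \<le> z k" "z k \<le> 1" using assms(2) Suc.prems by auto
    have "\<bar>p' - (\<Prod>j<Suc k. z j)\<bar> = \<bar>(p' - p * z k) + (p - (\<Prod>j<k. z j)) * z k\<bar>"
      by (simp add: algebra_simps)
    also have "\<dots> \<le> \<bar>p' - p * z k\<bar> + \<bar>p - (\<Prod>j<k. z j)\<bar> * z k"
      using zk by (metis abs_mult abs_of_nonneg abs_triangle_ineq)
    also have "\<dots> \<le> 1/4^m + (real k - 1) / 4^m * 1"
      using p(4) p'(4) zk by (intro add_mono mult_mono) auto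
    also have "\<dots> = (real (Suc k) - 1) / 4^m" using False by (simp add: field_simps)
    finally show ?thesis using p' e by auto
  qed
qed



definition bnd :: "real list list \<times> real list \<Rightarrow> real \<Rightarrow> bool" where
  "bnd M C \<longleftrightarrow> (\<forall>row \<in> set (fst M). \<forall>c \<in> set row. \<bar>c\<bar> \<le> C) \<and> (\<forall>c \<in> set (snd M). \<bar>c\<bar> \<le> C)"

lemma relu_fnn_build:
  assumes "layer_ok d w F" "bnd F C" "\<forall>M\<in>set mid. layer_ok w w M \<and> bnd M C" "layer_ok w 1 G" "bnd G C"
  shows "relu_fnn d w (length mid + 2) C (F # mid @ [G])"
proof -
  have H: "\<forall>l<length mid + 2. layer_ok (if l = 0 then d else w) (if l = length mid + 2 - 1 then 1 else w) ((F # mid @ [G]) ! l)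
        \<and> bnd ((F # mid @ [G]) ! l) C"
  proof (intro allI impI)
  fix l assume l: "l < length mid + 2"
  show "layer_ok (if l = 0 then d else w) (if l = length mid + 2 - 1 then 1 else w) ((F # mid @ [G]) ! l)
        \<and> bnd ((F # mid @ [G]) ! l) C"
  proof (cases "l = 0")
    case True then show ?thesis using assms by simp
  next
    case False
    then obtain l' where l': "l = Suc l'" by (cases l) auto
    show ?thesis
    proof (cases "l' < length mid")
      case True then show ?thesis using assms l' nth_mem by (simp add: nth_append)
    next
      case False then have "l' = length mid" using l l' by simp
      then show ?thesis using assms l' by (simp add: nth_append)
    qed
  qed
  qed
  then show ?thesis unfolding relu_fnn_def bnd_def by auto
qed

lemma mkL_bnd:
  assumes "\<forall>i<m. sum_list (map (\<lambda>(k,a). \<bar>a\<bar>) (R i)) \<le> C" "\<forall>i<m. \<bar>B i\<bar> \<le> C"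
  shows "layer_ok n m (mkL n m R B) \<and> bnd (mkL n m R B) C"
  using mkL_ok[OF assms] by (simp add: bnd_def)

lemma rs_RSt: "sum_list (map (\<lambda>(k,a). \<bar>a\<bar>) (RSt n k i)) \<le> 7"
  by (simp add: RSt_def urow_def)

lemma rs_RSp: "sum_list (map (\<lambda>(k,a). \<bar>a\<bar>) (RSp n s i)) \<le> 7"
proof -
  have "(1::real) \<le> 4^s" by simp
  then have "2/4^s \<le> (2::real)" "4/4^s \<le> (4::real)" by (simp_all add: divide_simps)
  then show ?thesis by (simp add: RSp_def)
qed

lemma rs_RFi: "sum_list (map (\<lambda>(k,a). \<bar>a\<bar>) (RFi n i)) \<le> 7"
  by (simp add: RFi_def)

lemma rs_RIn: "sum_list (map (\<lambda>(k,a). \<bar>a\<bar>) (RIn n fl i)) \<le> 7"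
  by (simp add: RIn_def)

lemma b_BCh: "\<bar>BCh n i\<bar> \<le> 7" by (simp add: BCh_def)
lemma b_BFi: "\<bar>BFi n i\<bar> \<le> 7" by (simp add: BFi_def)

lemma mid_ok:
  assumes "7 \<le> C"
  shows "\<forall>M\<in>set (concat (map (blk n w m) ks)). layer_ok w w M \<and> bnd M C"
proof -
  have a: "layer_ok w w M \<and> bnd M C" if "M = mkL w w R B" "\<forall>i. sum_list (map (\<lambda>(k,a). \<bar>a\<bar>) (R i)) \<le> 7"
     "\<forall>i. \<bar>B i\<bar> \<le> 7" for M R B
    unfolding that(1) by (rule mkL_bnd) (use that assms in \<open>meson order_trans\<close>)+
  show ?thesis
    unfolding blk_def using a rs_RSt rs_RSp rs_RFi b_BCh b_BFi by auto
qed

lemma length_blk: "length (concat (map (blk n w m) ks)) = length ks * (m + 2)"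
  by (induction ks) (auto simp: blk_def)



definition flat :: "nat list \<Rightarrow> nat list" where
  "flat \<alpha> = concat (map (\<lambda>i. replicate (\<alpha>!i) i) [0..<length \<alpha>])"

lemma length_flat: "length (flat \<alpha>) = sum_list \<alpha>"
proof -
  have "length (flat \<alpha>) = sum_list (map (\<lambda>i. \<alpha>!i) [0..<length \<alpha>])"
    by (simp add: flat_def length_concat o_def)
  also have "map (\<lambda>i. \<alpha>!i) [0..<length \<alpha>] = \<alpha>" by (simp add: map_nth)
  finally show ?thesis .
qed

lemma flat_idx: "j < length (flat \<alpha>) \<Longrightarrow> flat \<alpha> ! j < length \<alpha>"
proof -
  assume "j < length (flat \<alpha>)"
  then have "flat \<alpha> ! j \<in> set (flat \<alpha>)" by (rule nth_mem)
  then show ?thesis by (auto simp: flat_def)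
qed

lemma prod_concat: "prod_list (map f (concat (map g xs))) = prod_list (map (\<lambda>y. prod_list (map f (g y))) xs)"
  by (induction xs) auto

lemma prod_upt: "prod_list (map h [0..<d]) = (\<Prod>i<d. h i)"
  by (induction d) (auto simp: lessThan_Suc mult.commute)

lemma prod_flat: "(\<Prod>j<length (flat \<alpha>). (x :: real list) ! (flat \<alpha> ! j)) = (\<Prod>i<length \<alpha>. (x ! i) ^ (\<alpha> ! i))"
proof -
  have "(\<Prod>j<length (flat \<alpha>). x ! (flat \<alpha> ! j)) = prod_list (map (\<lambda>i. x!i) (flat \<alpha>))"
    by (simp add: prod.list_conv_set_nth atLeast0LessThan)
  also have "\<dots> = prod_list (map (\<lambda>i. x ! i ^ (\<alpha> ! i)) [0..<length \<alpha>])"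
    unfolding flat_def prod_concat by (simp add: prod_list_replicate)
  also have "\<dots> = (\<Prod>i<length \<alpha>. (x ! i) ^ (\<alpha> ! i))" by (rule prod_upt)
  finally show ?thesis .
qed

lemma init_ok:
  assumes "length x = d" "\<forall>j<n. fl!j < d" "0 < n" "n + 11 \<le> w" "\<forall>j<n. 0 \<le> x!(fl!j) \<and> x!(fl!j) \<le> 1"
  shows "PS n w (\<lambda>j. x!(fl!j)) (x!(fl!0)) (map (\<lambda>i. relu (sp (RIn n fl i) x + BFi n i)) [0..<w])"
proof -
  have "x!(fl!0) \<le> 1" "0 \<le> x!(fl!0)" using assms(3,5) by auto
  then show ?thesis using assms unfolding PS_def by (auto simp: RIn_def BFi_def sp_def relu_def)
qed

lemma hid_RIn:
  assumes "length x = d" "\<forall>j<n. fl!j < d" "0 < n"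
  shows "hid (mkL d w (RIn n fl) (BFi n) # Ls) x = hid Ls (map (\<lambda>i. relu (sp (RIn n fl i) x + BFi n i)) [0..<w])"
  by (rule hid_mkL) (use assms in \<open>auto simp: RIn_def\<close>)

lemma net_eval_snoc': "net_eval (Ls @ [G]) x = affine (fst G) (snd G) (hid Ls x)"
  using net_eval_snoc[of Ls "fst G" "snd G" x] by simp



lemma err_bd:
  assumes "0 < \<epsilon>" "m = nat \<lceil>ln (1/\<epsilon>)\<rceil> + n"
  shows "(real n - 1) / 4^m \<le> \<epsilon>"
proof -
  have "exp (real m) = exp 1 ^ m" using exp_of_nat_mult[of m 1] by simp
  also have "\<dots> \<le> 4 ^ m" using exp_le by (intro power_mono) auto
  finally have e4: "exp (real m) \<le> 4^m" .
  have "ln (1/\<epsilon>) + real n \<le> real m" using assms(2) by linarith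
  then have "exp (ln (1/\<epsilon>) + real n) \<le> exp (real m)" by simp
  moreover have "exp (ln (1/\<epsilon>) + real n) = (1/\<epsilon>) * exp (real n)" using assms(1) by (simp add: exp_add)
  moreover have "1 + real n \<le> exp (real n)" by (rule exp_ge_add_one_self)
  moreover have "(1/\<epsilon>) * (1 + real n) \<le> (1/\<epsilon>) * exp (real n)"
    using assms(1) \<open>1 + real n \<le> exp (real n)\<close> by (intro mult_left_mono) auto
  ultimately have "(1/\<epsilon>) * (1 + real n) \<le> 4^m" using e4 by linarith
  then have "(1 + real n) \<le> \<epsilon> * 4^m" using assms(1) by (simp add: field_simps)
  then show ?thesis by (simp add: divide_simps)
qed

lemma depth_bd:
  assumes "0 < \<epsilon>" "m = nat \<lceil>ln (1/\<epsilon>)\<rceil> + n" "2 \<le> n" "1 \<le> R"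
  shows "real ((n - 1) * (m + 2) + 2) \<le> 7 * (real n + 4)^2 * max 1 (ln (R / \<epsilon>))"
proof -
  define M where "M = max 1 (ln (R / \<epsilon>))"
  have M1: "1 \<le> M" by (simp add: M_def)
  have "ln (1/\<epsilon>) \<le> ln (R/\<epsilon>)" using assms(1,4) by (simp add: divide_right_mono)
  then have lm: "ln (1/\<epsilon>) \<le> M" unfolding M_def by linarith
  have "real m \<le> M + 1 + real n"
  proof -
    have "real (nat \<lceil>ln (1/\<epsilon>)\<rceil>) \<le> max 0 (ln (1/\<epsilon>)) + 1" by linarith
    then show ?thesis using assms(2) lm M1 by simp
  qed
  moreover have "(real n + 3) \<le> (real n + 3) * M" using M1 mult_left_mono[OF M1, of "real n + 3"] by simp
  moreover have "(real n + 4) * M = (real n + 3) * M + M" by (simp add: algebra_simps)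
  ultimately have "real m + 2 \<le> (real n + 4) * M" by linarith
  then have "(real n - 1) * (real m + 2) \<le> (real n - 1) * ((real n + 4) * M)"
    using assms(3) by (intro mult_left_mono) auto
  moreover have "real ((n - 1) * (m + 2) + 2) = (real n - 1) * (real m + 2) + 2" 
  proof -
    obtain n' where "n = Suc n'" using assms(3) by (cases n) auto
    then show ?thesis by (simp add: algebra_simps)
  qed
  moreover have "(real n - 1) * ((real n + 4) * M) + 2 * M \<le> 7 * (real n + 4)^2 * M"
  proof -
    have "(real n - 1) * (real n + 4) \<le> (real n + 4) * (real n + 4)" by (intro mult_right_mono) auto
    moreover have "1 \<le> (real n + 4) * (real n + 4)" using mult_mono[of 1 "real n + 4" 1 "real n + 4"] by simp
    ultimately have "(real n - 1) * (real n + 4) + 2 \<le> 7 * (real n + 4)^2" unfolding power2_eq_square by linarith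
    from mult_right_mono[OF this, of M] M1 have "((real n - 1) * (real n + 4) + 2) * M \<le> 7 * (real n + 4)^2 * M" by simp
    moreover have "((real n - 1) * (real n + 4) + 2) * M = (real n - 1) * ((real n + 4) * M) + 2 * M"
      by (simp add: distrib_right mult.assoc)
    ultimately show ?thesis by linarith
  qed
  ultimately show ?thesis unfolding M_def[symmetric] using M1 by linarith
qed



lemma core:
  fixes \<alpha> :: "nat list" and \<epsilon> :: real
  assumes "length \<alpha> \<ge> 1" "sum_list \<alpha> \<ge> 2" "0 < \<epsilon>" "a = nat \<lceil>log 2 (real (sum_list \<alpha>))\<rceil>"
  shows "\<exists>N L. relu_fnn (length \<alpha>) (21 * 2 ^ (a - 1)) L (7 * (real (sum_list \<alpha>) + 4)^2) N
           \<and> real L \<le> (7 * (real (sum_list \<alpha>) + 4)^2) * max 1 (ln ((3 ^ a - 1) / (2 * \<epsilon>)))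
           \<and> (\<forall>x. length x = length \<alpha> \<and> (\<forall>i<length \<alpha>. 0 \<le> x ! i \<and> x ! i \<le> 1) \<longrightarrow>
                 \<bar>hd (net_eval N x) - (\<Prod>i<length \<alpha>. (x ! i) ^ (\<alpha> ! i))\<bar> \<le> \<epsilon>)"
proof -
  define n where "n = sum_list \<alpha>"
  define d where "d = length \<alpha>"
  define w where "w = (21::nat) * 2 ^ (a - 1)"
  define C where "C = 7 * (real n + 4)^2"
  define fl where "fl = flat \<alpha>"
  define m where "m = nat \<lceil>ln (1/\<epsilon>)\<rceil> + n"
  have n2: "2 \<le> n" using assms(2) n_def by simp
  have lfl: "length fl = n" by (simp add: fl_def n_def length_flat)
  have fli: "\<forall>j<n. fl!j < d" using flat_idx lfl by (simp add: fl_def d_def)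
  have lg: "1 \<le> log 2 (real n)" using n2 by simp
  have c1: "1 \<le> \<lceil>log 2 (real n)\<rceil>" using lg by linarith
  have an: "a = nat \<lceil>log 2 (real n)\<rceil>" using assms(4) n_def by simp
  have ra: "real a = real_of_int \<lceil>log 2 (real n)\<rceil>" using an c1 by simp
  have a1: "1 \<le> a" using an c1 by linarith
  have "real n \<le> 2 ^ a"
  proof -
    have "log 2 (real n) \<le> real a" unfolding ra by (rule le_of_int_ceiling)
    then have "2 powr (log 2 (real n)) \<le> 2 powr (real a)" by simp
    then show ?thesis using n2 by (simp add: powr_realpow)
  qed
  then have "n \<le> 2 ^ a" by (metis of_nat_le_iff of_nat_numeral of_nat_power)
  moreover have "2 ^ a = 2 * (2::nat) ^ (a - 1)" using a1 by (metis Suc_diff_le diff_Suc_1 power_Suc)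
  ultimately have w11: "n + 11 \<le> w" unfolding w_def using n2 by linarith
  have C7: "7 \<le> C" unfolding C_def by simp
  define F where "F = mkL d w (RIn n fl) (BFi n)"
  define mid where "mid = concat (map (blk n w m) [1..<n])"
  define G where "G = mkL w 1 (\<lambda>_. [(n,1),(n+1,-1)]) (\<lambda>_. 0)"
  define N where "N = F # mid @ [G]"
  have lmid: "length mid = (n - 1) * (m + 2)" by (simp add: mid_def length_blk)
  have fnn: "relu_fnn d w (length mid + 2) C N"
    unfolding N_def
  proof (rule relu_fnn_build)
    show "layer_ok d w F" "bnd F C" unfolding F_def using mkL_bnd[of w "RIn n fl" C "BFi n" d] rs_RIn b_BFi C7
      by (meson order_trans)+
    show "\<forall>M\<in>set mid. layer_ok w w M \<and> bnd M C" unfolding mid_def by (rule mid_ok[OF C7])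
    show "layer_ok w 1 G" "bnd G C" unfolding G_def using mkL_bnd[of 1 "\<lambda>_. [(n,1),(n+1,-1)]" C "\<lambda>_. 0" w] C7
      by auto
  qed
  have depth: "real (length mid + 2) \<le> C * max 1 (ln ((3 ^ a - 1) / (2 * \<epsilon>)))"
  proof -
    have "(3::real) ^ 1 \<le> 3 ^ a" using a1 by (intro power_increasing) auto
    then have R1: "1 \<le> ((3::real) ^ a - 1) / 2" by simp
    have "((3::real) ^ a - 1) / (2 * \<epsilon>) = (((3::real) ^ a - 1) / 2) / \<epsilon>" by simp
    then show ?thesis using depth_bd[OF assms(3) m_def n2 R1] lmid unfolding C_def by simp
  qed
  have acc: "\<bar>hd (net_eval N x) - (\<Prod>i<d. (x ! i) ^ (\<alpha> ! i))\<bar> \<le> \<epsilon>"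
    if x: "length x = d" "\<forall>i<d. 0 \<le> x ! i \<and> x ! i \<le> 1" for x
  proof -
    define z where "z j = x!(fl!j)" for j
    have z01: "\<forall>j<n. 0 \<le> z j \<and> z j \<le> 1" using x fli z_def by auto
    have n0: "0 < n" using n2 by simp
    have ps0: "PS n w z (z 0) (map (\<lambda>i. relu (sp (RIn n fl i) x + BFi n i)) [0..<w])"
      using init_ok[OF x(1) fli n0 w11] z01 unfolding z_def by simp
    obtain p where p: "PS n w z p (hid mid (map (\<lambda>i. relu (sp (RIn n fl i) x + BFi n i)) [0..<w]))"
      "\<bar>p - (\<Prod>j<n. z j)\<bar> \<le> (real n - 1) / 4^m"
      using loop_ok[OF ps0 z01 w11, of n m] n2 unfolding mid_def by auto
    define vf where "vf = hid mid (map (\<lambda>i. relu (sp (RIn n fl i) x + BFi n i)) [0..<w])"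
    have lvf: "length vf = w" using p(1) by (simp add: PS_def vf_def)
    have "hid (F # mid) x = vf" unfolding F_def vf_def by (rule hid_RIn[OF x(1) fli n0])
    then have "net_eval N x = affine (fst G) (snd G) vf" unfolding N_def
      using net_eval_snoc'[of "F # mid" G x] by simp
    also have "\<dots> = [vf!n - vf!(n+1)]" unfolding G_def
      using affine_mkL[OF lvf, of 1 "\<lambda>_. [(n,1),(n+1,-1)]" "\<lambda>_. 0"] w11 by (simp add: sp_def)
    finally have "hd (net_eval N x) = p" using p(1) by (simp add: PS_def vf_def)
    moreover have "(\<Prod>j<n. z j) = (\<Prod>i<d. (x ! i) ^ (\<alpha> ! i))"
      unfolding z_def fl_def d_def using prod_flat[where \<alpha>=\<alpha> and x=x] lfl fl_def by simp
    ultimately show ?thesis using p(2) err_bd[OF assms(3) m_def] by simp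
  qed
  show ?thesis
    apply (rule exI[of _ N], rule exI[of _ "length mid + 2"])
    using fnn depth acc unfolding C_def d_def w_def n_def by auto
qed


theorem lemma9:
  fixes \<alpha> :: "nat list"
  assumes "length \<alpha> \<ge> 1"
    and "sum_list \<alpha> \<ge> 2"
  shows "\<exists>C>0. \<forall>\<epsilon>::real.
     (let d = length \<alpha>; a = nat \<lceil>log 2 (real (sum_list \<alpha>))\<rceil> in
       0 < \<epsilon> \<and> (a = 1 \<or> \<epsilon> \<le> (3 ^ a - 1) / (3 ^ (a - 1) - 1)) \<longrightarrow>
       (\<exists>N L. relu_fnn d (21 * 2 ^ (a - 1)) L C N
           \<and> real L \<le> C * max 1 (ln ((3 ^ a - 1) / (2 * \<epsilon>)))
           \<and> (\<forall>x. length x = d \<and> (\<forall>i<d. 0 \<le> x ! i \<and> x ! i \<le> 1) \<longrightarrow>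
                 \<bar>hd (net_eval N x) - (\<Prod>i<d. (x ! i) ^ (\<alpha> ! i))\<bar> \<le> \<epsilon>)))"
proof -
  have C0: "0 < 7 * (real (sum_list \<alpha>) + 4)^2" by simp
  show ?thesis unfolding Let_def
  proof (rule exI[of _ "7 * (real (sum_list \<alpha>) + 4)^2"], intro conjI allI impI C0)
    fix \<epsilon> :: real
    assume "0 < \<epsilon> \<and> (nat \<lceil>log 2 (real (sum_list \<alpha>))\<rceil> = 1 \<or> \<epsilon> \<le> (3 ^ nat \<lceil>log 2 (real (sum_list \<alpha>))\<rceil> - 1) / (3 ^ (nat \<lceil>log 2 (real (sum_list \<alpha>))\<rceil> - 1) - 1))"
    then have e: "0 < \<epsilon>" by simp
    show "\<exists>N L. relu_fnn (length \<alpha>) (21 * 2 ^ (nat \<lceil>log 2 (real (sum_list \<alpha>))\<rceil> - 1)) L (7 * (real (sum_list \<alpha>) + 4)^2) N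
           \<and> real L \<le> 7 * (real (sum_list \<alpha>) + 4)^2 * max 1 (ln ((3 ^ nat \<lceil>log 2 (real (sum_list \<alpha>))\<rceil> - 1) / (2 * \<epsilon>)))
           \<and> (\<forall>x. length x = length \<alpha> \<and> (\<forall>i<length \<alpha>. 0 \<le> x ! i \<and> x ! i \<le> 1) \<longrightarrow>
                 \<bar>hd (net_eval N x) - (\<Prod>i<length \<alpha>. (x ! i) ^ (\<alpha> ! i))\<bar> \<le> \<epsilon>)"
      by (rule core[OF assms e refl])
  qed
qed

end
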